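(* Let $A_0,\ldots,A_m\in\mathbb{R}^{n\times n}$, $\tau_0=0$, $\tau_1,\ldots,\tau_m>0$, weights $w_0,\ldots,w_m\in(0,\infty]$ with at least one finite ($1/\infty:=0$), $\epsilon>0$, and $\sigma\in\mathbb{R}$. Put $w(\sigma)=\sum_{i=0}^m e^{-\sigma\tau_i}/w_i$, $A_{\sigma,0}=A_0-\sigma I_n$, $A_{\sigma,i}=A_ie^{-\tau_i\sigma}$ ($1\le i\le m$), and for $\xi>0$ let $$H(\lambda,\sigma,\xi)=\lambda I_{2n}-\begin{pmatrix}A_{\sigma,0}&\xi^{-2}I_n\\-I_n&-A_{\sigma,0}^*\end{pmatrix}-\sum_{i=1}^m\left(\begin{pmatrix}A_{\sigma,i}&0\\0&0\end{pmatrix}e^{-\lambda\tau_i}+\begin{pmatrix}0&0\\0&-A_{\sigma,i}^*\end{pmatrix}e^{\lambda\tau_i}\right).$$ Define $h_\sigma(\lambda)=\det H\big(\lambda,\sigma,\frac{1}{\epsilon w(\sigma)}\big)$. Then for every $\omega\ge 0$, $\Im\, h_\sigma(j\omega)=0$ and $\Re\, h_\sigma'(j\omega)=0$.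
   Context: $h_\sigma'$ denotes the derivative of the entire function $\lambda\mapsto h_\sigma(\lambda)$. *)

theory Defs
  imports "HOL-Analysis.Analysis" "HOL-Library.Extended_Real"
begin

text \<open>Real n x n matrices are real^'n^'n; the 2n x 2n matrices are indexed by 'n + 'n.\<close>

definition cmat :: "real^'n^'n \<Rightarrow> complex^'n^'n" where
  "cmat A = (\<chi> i j. complex_of_real (A$i$j))"

definition ctrans :: "complex^'n^'n \<Rightarrow> complex^'n^'n" where
  "ctrans M = (\<chi> i j. cnj (M$j$i))"

definition cscale :: "complex \<Rightarrow> complex^'m^'n \<Rightarrow> complex^'m^'n" where
  "cscale c M = (\<chi> i j. c * M$i$j)"

definition block :: "'a^'n^'n \<Rightarrow> 'a^'n^'n \<Rightarrow> 'a^'n^'n \<Rightarrow> 'a^'n^'n \<Rightarrow> 'a^('n+'n)^('n+'n)" where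
  "block P Q R S = (\<chi> i j. case i of
       Inl a \<Rightarrow> (case j of Inl b \<Rightarrow> P$a$b | Inr b \<Rightarrow> Q$a$b)
     | Inr a \<Rightarrow> (case j of Inl b \<Rightarrow> R$a$b | Inr b \<Rightarrow> S$a$b))"

definition inv_weight :: "ereal \<Rightarrow> real" where
  "inv_weight x = (if x = \<infinity> then 0 else 1 / real_of_ereal x)"

definition wsig :: "nat \<Rightarrow> (nat \<Rightarrow> real) \<Rightarrow> (nat \<Rightarrow> ereal) \<Rightarrow> real \<Rightarrow> real" where
  "wsig m \<tau> w \<sigma> = (\<Sum>i\<le>m. exp (- \<sigma> * \<tau> i) * inv_weight (w i))"

definition Asig :: "(nat \<Rightarrow> real^'n^'n) \<Rightarrow> (nat \<Rightarrow> real) \<Rightarrow> real \<Rightarrow> nat \<Rightarrow> real^'n^'n" where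
  "Asig A \<tau> \<sigma> i = (if i = 0 then A 0 - \<sigma> *\<^sub>R mat 1 else exp (- \<tau> i * \<sigma>) *\<^sub>R A i)"

definition Hmat :: "nat \<Rightarrow> (nat \<Rightarrow> real^'n^'n) \<Rightarrow> (nat \<Rightarrow> real) \<Rightarrow> real \<Rightarrow> real \<Rightarrow> complex
    \<Rightarrow> complex^('n+'n)^('n+'n)" where
  "Hmat m A \<tau> \<sigma> \<xi> z =
     cscale z (mat 1)
     - block (cmat (Asig A \<tau> \<sigma> 0)) (cscale (complex_of_real (inverse (\<xi>^2))) (mat 1))
             (- mat 1) (- ctrans (cmat (Asig A \<tau> \<sigma> 0)))
     - (\<Sum>i\<in>{1..m}.
          cscale (exp (- z * complex_of_real (\<tau> i))) (block (cmat (Asig A \<tau> \<sigma> i)) 0 0 0)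
        + cscale (exp (z * complex_of_real (\<tau> i))) (block 0 0 0 (- ctrans (cmat (Asig A \<tau> \<sigma> i)))))"

definition hsig :: "nat \<Rightarrow> (nat \<Rightarrow> real^'n^'n) \<Rightarrow> (nat \<Rightarrow> real) \<Rightarrow> (nat \<Rightarrow> ereal) \<Rightarrow> real \<Rightarrow> real
    \<Rightarrow> complex \<Rightarrow> complex" where
  "hsig m A \<tau> w \<epsilon> \<sigma> z = det (Hmat m A \<tau> \<sigma> (1 / (\<epsilon> * wsig m \<tau> w \<sigma>)) z)"

end

theory Submission
  imports Defs "HOL-Library.Cardinality"
begin

definition Pm :: "nat \<Rightarrow> (nat \<Rightarrow> real^'n^'n) \<Rightarrow> (nat \<Rightarrow> real) \<Rightarrow> real \<Rightarrow> complex \<Rightarrow> complex^'n^'n" where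
  "Pm m A \<tau> \<sigma> z = (\<chi> a b. (if a = b then z else 0) - complex_of_real (Asig A \<tau> \<sigma> 0 $ a $ b)
     - (\<Sum>k\<in>{1..m}. exp (- z * complex_of_real (\<tau> k)) * complex_of_real (Asig A \<tau> \<sigma> k $ a $ b)))"

lemma Hmat_block:
  "Hmat m A \<tau> \<sigma> \<xi> z = block (Pm m A \<tau> \<sigma> z)
     (\<chi> a b. if a = b then - complex_of_real (inverse (\<xi>^2)) else 0) (mat 1)
     (- transpose (Pm m A \<tau> \<sigma> (- z)))"
  unfolding vec_eq_iff
proof (intro allI)
  fix i j :: "'a + 'a"
  show "Hmat m A \<tau> \<sigma> \<xi> z $ i $ j = block (Pm m A \<tau> \<sigma> z)
     (\<chi> a b. if a = b then - complex_of_real (inverse (\<xi>^2)) else 0) (mat 1)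
     (- transpose (Pm m A \<tau> \<sigma> (- z))) $ i $ j"
    by (cases i; cases j) (auto simp: Hmat_def block_def Pm_def cscale_def cmat_def ctrans_def mat_def transpose_def sum_negf)
qed

definition sw :: "'a + 'a \<Rightarrow> 'a + 'a" where
  "sw x = (case x of Inl a \<Rightarrow> Inr a | Inr a \<Rightarrow> Inl a)"

definition dd :: "'a + 'a \<Rightarrow> complex" where
  "dd x = (case x of Inl a \<Rightarrow> 1 | Inr a \<Rightarrow> -1)"

lemma sw_sw [simp]: "sw (sw x) = x"
  by (cases x) (auto simp: sw_def)

lemma sw_permutes: "sw permutes UNIV"
proof (rule bij_imp_permutes)
  show "bij_betw sw UNIV UNIV"
    by (rule bij_betwI[where g=sw]) auto
qed auto

lemma dd_sq [simp]: "dd x * dd x = 1"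
  by (cases x) (auto simp: dd_def)

lemma det_scale_rc:
  fixes M :: "complex^'m^'m" and d :: "'m \<Rightarrow> complex"
  shows "det (\<chi> i j. d i * d j * M $ i $ j) = (\<Prod>i\<in>UNIV. d i) * (\<Prod>i\<in>UNIV. d i) * det M"
proof -
  have "(\<chi> i j. d i * d j * M $ i $ j) = (\<chi> i. d i *s (\<chi> j. d j * M $ i $ j))"
    by (simp add: vec_eq_iff mult.assoc)
  hence "det (\<chi> i j. d i * d j * M $ i $ j) = prod d UNIV * det (\<chi> i j. d j * M $ i $ j)"
    using det_rows_mul[of d "\<lambda>i. (\<chi> j. d j * M $ i $ j)"] by simp
  also have "det (\<chi> i j. d j * M $ i $ j) = det (transpose (\<chi> i j. d j * M $ i $ j))"
    by simp
  also have "transpose (\<chi> i j. d j * M $ i $ j) = (\<chi> i. d i *s (transpose M $ i))"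
    by (simp add: vec_eq_iff transpose_def)
  also have "det \<dots> = prod d UNIV * det (transpose M)"
    using det_rows_mul[of d "\<lambda>i. transpose M $ i"] by simp
  finally show ?thesis by (simp add: mult.assoc)
qed

lemma prod_dd_sq: "(\<Prod>i\<in>(UNIV::('a::finite+'a) set). dd i) * (\<Prod>i\<in>(UNIV::('a+'a) set). dd i) = 1"
proof -
  have "(\<Prod>i\<in>(UNIV::('a+'a) set). dd i * dd i) = 1" by simp
  thus ?thesis by (simp only: prod.distrib[symmetric])
qed

lemma det_perm_rc:
  fixes M :: "complex^('a::finite+'a)^('a+'a)"
  shows "det (\<chi> i j. M $ sw i $ sw j) = det M"
proof -
  have "det (\<chi> i j. M $ sw i $ sw j) = det (\<chi> i. (\<chi> i j. M $ i $ sw j) $ sw i)"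
    by (simp add: vec_eq_iff)
  also have "\<dots> = of_int (sign (sw::'a+'a \<Rightarrow> 'a+'a)) * det (\<chi> i j. M $ i $ sw j)"
    using det_permute_rows[OF sw_permutes, of "(\<chi> i j. M $ i $ sw j)"] by simp
  also have "det (\<chi> i j. M $ i $ sw j) = of_int (sign (sw::'a+'a \<Rightarrow> 'a+'a)) * det M"
    using det_permute_columns[OF sw_permutes, of M] by simp
  moreover have "of_int (sign (sw::'a+'a \<Rightarrow> 'a+'a)) * of_int (sign (sw::'a+'a \<Rightarrow> 'a+'a)) = (1::complex)"
    by (metis of_int_mult sign_idempotent of_int_1)
  ultimately show ?thesis
    by (metis mult.assoc mult_1)
qed

lemma det_neg_even:
  fixes M :: "complex^('a::finite+'a)^('a+'a)"
  shows "det (- M) = det M"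
proof -
  have e: "- M = (\<chi> i. (-1) *s M $ i)" by (simp add: vec_eq_iff)
  have "det (\<chi> i. (-1) *s M $ i) = (\<Prod>i\<in>(UNIV::('a+'a) set). -1) * det (\<chi> i. M $ i)"
    by (rule det_rows_mul)
  moreover have "(\<Prod>i\<in>(UNIV::('a+'a) set). (-1::complex)) = (-1) ^ (CARD('a) + CARD('a))"
    by (simp add: card_sum)
  moreover have "(-1::complex) ^ (CARD('a) + CARD('a)) = 1"
    by (simp add: power_add)
  ultimately show ?thesis using e by simp
qed

lemma H_sym:
  "transpose (Hmat m A \<tau> \<sigma> \<xi> (-z)) =
     - (\<chi> i j. dd i * dd j * Hmat m A \<tau> \<sigma> \<xi> z $ sw i $ sw j)"
  unfolding vec_eq_iff
proof (intro allI)
  fix i j :: "'a + 'a"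
  show "transpose (Hmat m A \<tau> \<sigma> \<xi> (-z)) $ i $ j =
     (- (\<chi> i j. dd i * dd j * Hmat m A \<tau> \<sigma> \<xi> z $ sw i $ sw j)) $ i $ j"
    by (cases i; cases j) (auto simp: Hmat_block block_def sw_def dd_def transpose_def mat_def)
qed

lemma hsig_even:
  fixes A :: "nat \<Rightarrow> real^'n::finite^'n"
  shows "hsig m A \<tau> w \<epsilon> \<sigma> (-z) = hsig m A \<tau> w \<epsilon> \<sigma> z"
proof -
  define H where "H = Hmat m A \<tau> \<sigma> (1 / (\<epsilon> * wsig m \<tau> w \<sigma>)) z"
  have "hsig m A \<tau> w \<epsilon> \<sigma> (-z) = det (transpose (Hmat m A \<tau> \<sigma> (1 / (\<epsilon> * wsig m \<tau> w \<sigma>)) (-z)))"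
    by (simp add: hsig_def)
  also have "\<dots> = det (- (\<chi> i j. dd i * dd j * H $ sw i $ sw j))"
    unfolding H_def by (rule arg_cong[where f=det], rule H_sym)
  also have "\<dots> = det (\<chi> i j. dd i * dd j * H $ sw i $ sw j)"
    by (rule det_neg_even)
  also have "(\<chi> i j. dd i * dd j * H $ sw i $ sw j) = (\<chi> i j. dd i * dd j * (\<chi> i j. H $ sw i $ sw j) $ i $ j)"
    by simp
  also have "det \<dots> = det H"
  proof -
    have s1: "det (\<chi> i j. dd i * dd j * (\<chi> i j. H $ sw i $ sw j) $ i $ j) = (\<Prod>i\<in>(UNIV::('n+'n) set). dd i) * (\<Prod>i\<in>(UNIV::('n+'n) set). dd i) * det (\<chi> i j. H $ sw i $ sw j)"
      by (rule det_scale_rc)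
    have s2: "(\<Prod>i\<in>(UNIV::('n+'n) set). dd i) * (\<Prod>i\<in>(UNIV::('n+'n) set). dd i) = 1"
      by (rule prod_dd_sq)
    have s3: "det (\<chi> i j. H $ sw i $ sw j) = det H" by (rule det_perm_rc)
    show ?thesis by (simp only: s1 s2 s3 mult_1)
  qed
  finally show ?thesis by (simp add: H_def hsig_def)
qed

lemma det_cnj: "det (\<chi> i j. cnj (M $ i $ j)) = cnj (det (M::complex^'n^'n))"
  by (simp add: det_def)

lemma H_cnj: "(\<chi> i j. cnj (Hmat m A \<tau> \<sigma> \<xi> (cnj z) $ i $ j)) = Hmat m A \<tau> \<sigma> \<xi> z"
  unfolding vec_eq_iff
proof (intro allI)
  fix i j :: "'a + 'a"
  show "(\<chi> i j. cnj (Hmat m A \<tau> \<sigma> \<xi> (cnj z) $ i $ j)) $ i $ j = Hmat m A \<tau> \<sigma> \<xi> z $ i $ j"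
    by (cases i; cases j) (auto simp: Hmat_block block_def Pm_def transpose_def mat_def exp_cnj)
qed

lemma hsig_cnj: "hsig m A \<tau> w \<epsilon> \<sigma> (cnj z) = cnj (hsig m A \<tau> w \<epsilon> \<sigma> z)"
proof -
  have "Hmat m A \<tau> \<sigma> (1 / (\<epsilon> * wsig m \<tau> w \<sigma>)) (cnj z) = (\<chi> i j. cnj (Hmat m A \<tau> \<sigma> (1 / (\<epsilon> * wsig m \<tau> w \<sigma>)) z $ i $ j))"
    using H_cnj[of m A \<tau> \<sigma> "1 / (\<epsilon> * wsig m \<tau> w \<sigma>)" "cnj z"] by simp
  thus ?thesis by (simp add: hsig_def det_cnj)
qed

lemma det_holo:
  fixes F :: "complex \<Rightarrow> complex^'n^'n"
  assumes "\<And>i j. (\<lambda>z. F z $ i $ j) holomorphic_on UNIV"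
  shows "(\<lambda>z. det (F z)) holomorphic_on UNIV"
  unfolding det_def by (intro holomorphic_intros assms)

lemma H_holo: "(\<lambda>z. Hmat m A \<tau> \<sigma> \<xi> z $ i $ j) holomorphic_on UNIV"
proof (cases i; cases j)
  fix a b assume "i = Inl a" "j = Inl b"
  thus ?thesis
    by (cases "a = b") (auto simp: Hmat_block block_def Pm_def intro!: holomorphic_intros)
next
  fix a b assume "i = Inl a" "j = Inr b"
  thus ?thesis
    by (cases "a = b") (auto simp: Hmat_block block_def Pm_def intro!: holomorphic_intros)
next
  fix a b assume "i = Inr a" "j = Inl b"
  thus ?thesis
    by (cases "a = b") (auto simp: Hmat_block block_def Pm_def mat_def intro!: holomorphic_intros)
next
  fix a b assume "i = Inr a" "j = Inr b"
  thus ?thesis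
    by (cases "a = b") (auto simp: Hmat_block block_def Pm_def transpose_def intro!: holomorphic_intros)
qed

lemma hsig_holo: "hsig m A \<tau> w \<epsilon> \<sigma> holomorphic_on UNIV"
  unfolding hsig_def by (rule det_holo, rule H_holo)

theorem proposition2:
  fixes m :: nat and A :: "nat \<Rightarrow> real^'n^'n" and \<tau> :: "nat \<Rightarrow> real"
    and w :: "nat \<Rightarrow> ereal" and \<epsilon> \<sigma> \<omega> :: real
  assumes "\<tau> 0 = 0"
    and "\<forall>i\<in>{1..m}. \<tau> i > 0"
    and "\<forall>i\<le>m. 0 < w i"
    and "\<exists>i\<le>m. w i \<noteq> \<infinity>"
    and "\<epsilon> > 0"
    and "\<omega> \<ge> 0"
  shows "Im (hsig m A \<tau> w \<epsilon> \<sigma> (\<i> * complex_of_real \<omega>)) = 0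
       \<and> Re (deriv (hsig m A \<tau> w \<epsilon> \<sigma>) (\<i> * complex_of_real \<omega>)) = 0"
proof -
  define h where "h = hsig m A \<tau> w \<epsilon> \<sigma>"
  define x where "x = \<i> * complex_of_real \<omega>"
  have cx: "cnj x = - x" by (simp add: x_def)
  have ev: "\<And>z. h (-z) = h z" unfolding h_def by (rule hsig_even)
  have cj: "\<And>z. h (cnj z) = cnj (h z)" unfolding h_def by (rule hsig_cnj)
  have "cnj (h x) = h x" using cj[of x] ev[of x] cx by simp
  hence im: "Im (h x) = 0" by (simp add: complex_eq_iff)
  have hol: "h holomorphic_on UNIV" unfolding h_def by (rule hsig_holo)
  have d: "\<And>z. (h has_field_derivative deriv h z) (at z)"
    using holomorphic_derivI[OF hol] by simp
  have "((\<lambda>z. - z) has_field_derivative -1) (at x)"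
    by (auto intro!: derivative_eq_intros)
  from DERIV_chain[OF d[of "-x"] this]
  have "((h \<circ> uminus) has_field_derivative deriv h (-x) * -1) (at x)" by simp
  moreover have "h \<circ> uminus = h" using ev by (simp add: fun_eq_iff)
  ultimately have d1: "deriv h x = - deriv h (-x)"
    using DERIV_imp_deriv by fastforce
  have "((cnj \<circ> h \<circ> cnj) has_field_derivative cnj (deriv h (cnj x))) (at x)"
    by (rule has_field_derivative_cnj_cnj[OF d])
  moreover have "cnj \<circ> h \<circ> cnj = h" using cj by (simp add: fun_eq_iff)
  ultimately have d2: "deriv h x = cnj (deriv h (-x))"
    using DERIV_imp_deriv cx by fastforce
  have "cnj (deriv h (-x)) = - deriv h (-x)" using d1 d2 by simp
  hence "Re (deriv h (-x)) = 0" by (simp add: complex_eq_iff)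
  hence "Re (deriv h x) = 0" using d1 by simp
  with im show ?thesis by (simp add: h_def x_def)
qed

end
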